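(* Let $n\ge2$ be even and $q>0$. Let $\omega=(nq,\ldots,nq,-nq,\ldots,-nq)\in\mathbb{R}^n$ (with $n/2$ entries equal to $nq$ followed by $n/2$ entries equal to $-nq$) and $k=(n,\ldots,n)$. Then, counting multiplicity, the number of equilibria $\theta\in(-\pi,\pi]^n$ satisfying $$\omega_\nu=\frac1n\sum_{\mu=1}^nk_\nu k_\mu\sin(\theta_\nu-\theta_\mu)\ (\nu=1,\ldots,n),\qquad \sum_{\mu=1}^nk_\mu e^{i\theta_\mu}\in\mathbb{R}_{\ge0},$$ is exactly $$2^n-\sum_{-q<\ell<q}\binom{n}{n/2+\ell},$$ the sum running over integers $\ell$. Hence the number of equilibria changes precisely at the integers $q=1,2,\ldots,n/2$.
   Context: Each such equilibrium corresponds to a sign pattern $\sigma\in\{-1,+1\}^n$ ($\sigma_\nu=\operatorname{sign}\cos\theta_\nu$) and a value $R=\left(\frac1n\sum_\mu k_\mu\cos\theta_\mu\right)^2>0$ that is a root of $f_\sigma(R)=-R+\frac1n\sum_{\mu=1}^n\sigma_\mu\sqrt{k_\mu^2R-\omega_\mu^2}$; "counting multiplicity" means the equilibrium is counted with the multiplicity of $R$ as a root of $f_\sigma$ (so an equilibrium coming from a double root is counted twice). *)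

theory Defs
  imports "HOL-Analysis.Analysis"
begin

definition is_equilibrium :: "nat \<Rightarrow> (nat \<Rightarrow> real) \<Rightarrow> (nat \<Rightarrow> real) \<Rightarrow> (nat \<Rightarrow> real) \<Rightarrow> bool" where
  "is_equilibrium n \<omega> k \<theta> \<longleftrightarrow>
     \<theta> \<in> PiE {1..n} (\<lambda>_. {-pi<..pi}) \<and>
     (\<forall>\<nu>\<in>{1..n}. \<omega> \<nu> = (1 / real n) * (\<Sum>\<mu>=1..n. k \<nu> * k \<mu> * sin (\<theta> \<nu> - \<theta> \<mu>))) \<and>
     (let z = (\<Sum>\<mu>=1..n. complex_of_real (k \<mu>) * exp (\<i> * complex_of_real (\<theta> \<mu>)))
      in Im z = 0 \<and> Re z \<ge> 0)"

definition f_sigma :: "nat \<Rightarrow> (nat \<Rightarrow> real) \<Rightarrow> (nat \<Rightarrow> real) \<Rightarrow> (nat \<Rightarrow> real) \<Rightarrow> real \<Rightarrow> real" where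
  "f_sigma n \<omega> k \<sigma> R = - R + (1 / real n) * (\<Sum>\<mu>=1..n. \<sigma> \<mu> * sqrt ((k \<mu>)\<^sup>2 * R - (\<omega> \<mu>)\<^sup>2))"

definition sign_pattern :: "(nat \<Rightarrow> real) \<Rightarrow> nat \<Rightarrow> real" where
  "sign_pattern \<theta> \<mu> = sgn (cos (\<theta> \<mu>))"

definition order_R :: "nat \<Rightarrow> (nat \<Rightarrow> real) \<Rightarrow> (nat \<Rightarrow> real) \<Rightarrow> real" where
  "order_R n k \<theta> = ((1 / real n) * (\<Sum>\<mu>=1..n. k \<mu> * cos (\<theta> \<mu>)))\<^sup>2"

definition root_mult :: "(real \<Rightarrow> real) \<Rightarrow> real \<Rightarrow> nat" where
  "root_mult f x = (LEAST m. (deriv ^^ m) f x \<noteq> 0)"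

definition eq_mult :: "nat \<Rightarrow> (nat \<Rightarrow> real) \<Rightarrow> (nat \<Rightarrow> real) \<Rightarrow> (nat \<Rightarrow> real) \<Rightarrow> nat" where
  "eq_mult n \<omega> k \<theta> = root_mult (f_sigma n \<omega> k (sign_pattern \<theta>)) (order_R n k \<theta>)"

end

theory Submission
  imports Defs
begin


lemma rm1: assumes "f x = 0" "deriv f x \<noteq> 0" shows "root_mult f x = 1"
  unfolding root_mult_def
proof (rule Least_equality)
  show "(deriv ^^ 1) f x \<noteq> 0" using assms by simp
  fix y assume "(deriv ^^ y) f x \<noteq> 0" then show "1 \<le> y" using assms by (cases y) auto
qed

lemma rm2: assumes "f x = 0" "deriv f x = 0" "deriv (deriv f) x \<noteq> 0" shows "root_mult f x = 2"
  unfolding root_mult_def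
proof (rule Least_equality)
  show "(deriv ^^ 2) f x \<noteq> 0" using assms by (simp add: numeral_2_eq_2)
  fix y assume "(deriv ^^ y) f x \<noteq> 0" then show "2 \<le> y" using assms
    by (cases y; cases "y - 1") (auto simp: numeral_2_eq_2)
qed

lemma g_deriv:
  fixes s q R :: real
  assumes "R > q\<^sup>2"
  shows "((\<lambda>R. - R + s * sqrt (R - q\<^sup>2)) has_real_derivative (-1 + s / (2 * sqrt (R - q\<^sup>2)))) (at R)"
  using assms by (auto intro!: derivative_eq_intros simp: field_simps)

lemma g_deriv2:
  fixes s q R :: real
  assumes "R > q\<^sup>2"
  shows "((\<lambda>R. -1 + s / (2 * sqrt (R - q\<^sup>2))) has_real_derivative (- s / (4 * (R - q\<^sup>2) * sqrt (R - q\<^sup>2)))) (at R)"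
proof -
  have p: "sqrt (R - q\<^sup>2) > 0" using assms by simp
  show ?thesis
  using assms p by (auto intro!: derivative_eq_intros simp: field_simps power2_eq_square)
qed




lemma Z_empty:
  fixes s q :: real assumes q: "q > 0" and s: "\<not> s \<ge> 2*q"
  shows "{R. R > q\<^sup>2 \<and> - R + s * sqrt (R - q\<^sup>2) = 0} = {}"
proof (rule ccontr)
  assume "\<not> ?thesis"
  then obtain R where R: "R > q\<^sup>2" "R = s * sqrt (R - q\<^sup>2)" by auto
  have sq: "sqrt (R - q\<^sup>2) > 0" using R by simp
  have R0: "R > 0" using R(1) q by (meson less_trans zero_less_power)
  have spos: "s > 0" using R0 R(2) sq by (metis zero_less_mult_pos2)
  have "R\<^sup>2 = s\<^sup>2 * (R - q\<^sup>2)" using R by (metis power_mult_distrib real_sqrt_pow2 less_eq_real_def diff_ge_0_iff_ge)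
  then have e: "(R - s\<^sup>2/2)\<^sup>2 = s\<^sup>2 * (s\<^sup>2/4 - q\<^sup>2)" by (simp add: power2_eq_square field_simps)
  have "s\<^sup>2 < (2*q)\<^sup>2" using s spos q by (intro power_strict_mono) auto
  then have "s\<^sup>2 * (s\<^sup>2/4 - q\<^sup>2) < 0" using spos by (intro mult_pos_neg) (auto simp: power2_eq_square)
  with e show False by (metis not_less zero_le_power2)
qed

lemma Z_roots:
  fixes s q :: real assumes q: "q > 0" and s: "s \<ge> 2*q"
  defines "D \<equiv> sqrt (s\<^sup>2 - 4*q\<^sup>2)"
  shows "{R. R > q\<^sup>2 \<and> - R + s * sqrt (R - q\<^sup>2) = 0} = {(s\<^sup>2 + s*D)/2, (s\<^sup>2 - s*D)/2}"
proof -
  have spos: "s > 0" using q s by linarith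
  have s4': "(2*q)\<^sup>2 \<le> s\<^sup>2" using s q by (intro power_mono) auto
  then have s4: "4*q\<^sup>2 \<le> s\<^sup>2" by (simp add: power_mult_distrib)
  have D0: "D \<ge> 0" unfolding D_def using s4 by simp
  have DD: "D\<^sup>2 = s\<^sup>2 - 4*q\<^sup>2" unfolding D_def using s4 by simp
  have Dlt: "D < s"
  proof -
    have "D\<^sup>2 < s\<^sup>2" using DD q by simp
    then show ?thesis using spos D0 by (meson power_less_imp_less_base less_le)
  qed
  have sD: "(s*D/2)\<^sup>2 = s\<^sup>2*(s\<^sup>2 - 4*q\<^sup>2)/4" by (simp add: power_mult_distrib power_divide DD)
  have key: "R > q\<^sup>2 \<and> - R + s * sqrt (R - q\<^sup>2) = 0 \<longleftrightarrow> (R - s\<^sup>2/2)\<^sup>2 = (s*D/2)\<^sup>2 \<and> R > 0" for R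
  proof
    assume A: "R > q\<^sup>2 \<and> - R + s * sqrt (R - q\<^sup>2) = 0"
    then have R: "R = s * sqrt (R - q\<^sup>2)" and Rq: "R > q\<^sup>2" by simp_all
    have R0: "R > 0" using Rq q by (meson less_trans zero_less_power)
    have "R\<^sup>2 = s\<^sup>2 * (R - q\<^sup>2)" using R Rq by (metis power_mult_distrib real_sqrt_pow2 less_eq_real_def diff_ge_0_iff_ge)
    then show "(R - s\<^sup>2/2)\<^sup>2 = (s*D/2)\<^sup>2 \<and> R > 0" unfolding sD using R0 by (simp add: power2_eq_square field_simps)
  next
    assume B: "(R - s\<^sup>2/2)\<^sup>2 = (s*D/2)\<^sup>2 \<and> R > 0"
    then have e: "R\<^sup>2 = s\<^sup>2 * (R - q\<^sup>2)" unfolding sD by (simp add: power2_eq_square field_simps)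
    then have e2: "R - q\<^sup>2 = (R/s)\<^sup>2" using spos by (simp add: power_divide field_simps)
    then have "sqrt (R - q\<^sup>2) = R/s" using B spos by simp
    moreover have "R - q\<^sup>2 > 0" using e2 B spos by simp
    ultimately show "R > q\<^sup>2 \<and> - R + s * sqrt (R - q\<^sup>2) = 0" using B spos by simp
  qed
  have pos: "(s\<^sup>2 - s*D)/2 > 0" using Dlt spos by (simp add: power2_eq_square)
  have pos2: "(s\<^sup>2 + s*D)/2 > 0" using D0 spos by (simp add: power2_eq_square add_pos_nonneg)
  show ?thesis
  proof (rule set_eqI)
    fix R
    have "(R - s\<^sup>2/2)\<^sup>2 = (s*D/2)\<^sup>2 \<longleftrightarrow> R - s\<^sup>2/2 = s*D/2 \<or> R - s\<^sup>2/2 = -(s*D/2)"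
      by (simp add: power2_eq_iff)
    then show "R \<in> {R. R > q\<^sup>2 \<and> - R + s * sqrt (R - q\<^sup>2) = 0} \<longleftrightarrow> R \<in> {(s\<^sup>2 + s*D)/2, (s\<^sup>2 - s*D)/2}"
      using key[of R] pos pos2 by (auto simp: field_simps)
  qed
qed




lemma Z_deriv:
  fixes s q R :: real assumes q: "q > 0" and R: "R > q\<^sup>2" "- R + s * sqrt (R - q\<^sup>2) = 0"
  shows "deriv (\<lambda>R. - R + s * sqrt (R - q\<^sup>2)) R = -1 + s\<^sup>2 / (2*R)"
proof -
  have sq: "sqrt (R - q\<^sup>2) > 0" using R by simp
  have R0: "R > 0" using R(1) q by (meson less_trans zero_less_power)
  have s0: "s \<noteq> 0" using R R0 by auto
  have e: "sqrt (R - q\<^sup>2) = R / s" using R s0 by (auto simp: field_simps)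
  have "deriv (\<lambda>R. - R + s * sqrt (R - q\<^sup>2)) R = -1 + s / (2 * sqrt (R - q\<^sup>2))"
    by (rule DERIV_imp_deriv[OF g_deriv[OF R(1)]])
  also have "\<dots> = -1 + s\<^sup>2 / (2*R)" unfolding e using R sq e by (simp add: power2_eq_square)
  finally show ?thesis .
qed

lemma Z_sum:
  fixes s q :: real assumes q: "q > 0"
  shows "finite {R. R > q\<^sup>2 \<and> - R + s * sqrt (R - q\<^sup>2) = 0} \<and>
    (\<Sum>R\<in>{R. R > q\<^sup>2 \<and> - R + s * sqrt (R - q\<^sup>2) = 0}. root_mult (\<lambda>R. - R + s * sqrt (R - q\<^sup>2)) R)
     = (if s \<ge> 2*q then 2 else 0)"
proof (cases "s \<ge> 2*q")
  case False
  then show ?thesis by (simp only: Z_empty[OF q False]) simp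
next
  case True
  define D where "D = sqrt (s\<^sup>2 - 4*q\<^sup>2)"
  define g where "g = (\<lambda>R. - R + s * sqrt (R - q\<^sup>2))"
  have Z: "{R. R > q\<^sup>2 \<and> - R + s * sqrt (R - q\<^sup>2) = 0} = {(s\<^sup>2 + s*D)/2, (s\<^sup>2 - s*D)/2}"
    using Z_roots[OF q True] by (simp add: D_def)
  have spos: "s > 0" using q True by linarith
  have inZ: "R > q\<^sup>2 \<and> g R = 0" if "R \<in> {(s\<^sup>2 + s*D)/2, (s\<^sup>2 - s*D)/2}" for R
    using that Z unfolding g_def by blast
  show ?thesis
  proof (cases "s = 2*q")
    case True
    have D0: "D = 0" unfolding D_def using True by (simp add: power_mult_distrib)
    let ?x = "s\<^sup>2/2"
    have x: "?x > q\<^sup>2 \<and> g ?x = 0" using inZ[of ?x] D0 by simp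
    have d1: "deriv g ?x = 0" using Z_deriv[OF q, of ?x s] x spos unfolding g_def by simp
    have ev: "eventually (\<lambda>y. deriv g y = -1 + s / (2 * sqrt (y - q\<^sup>2))) (nhds ?x)"
    proof -
      have "eventually (\<lambda>y. y \<in> {q\<^sup>2<..}) (nhds ?x)" using x by (intro eventually_nhds_in_open) auto
      then show ?thesis
        by eventually_elim (unfold g_def, rule DERIV_imp_deriv, rule g_deriv, simp)
    qed
    have "deriv (deriv g) ?x = deriv (\<lambda>y. -1 + s / (2 * sqrt (y - q\<^sup>2))) ?x"
      by (rule deriv_cong_ev[OF ev refl])
    also have "\<dots> = - s / (4 * (?x - q\<^sup>2) * sqrt (?x - q\<^sup>2))"
      using x by (intro DERIV_imp_deriv g_deriv2) auto
    also have "\<dots> \<noteq> 0" using x spos by auto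
    finally have d2: "deriv (deriv g) ?x \<noteq> 0" .
    have "root_mult g ?x = 2" using rm2[of g ?x] x d1 d2 by simp
    then show ?thesis using Z D0 True unfolding g_def by simp
  next
    case False
    then have sg: "s > 2*q" using True by simp
    have "(2*q)\<^sup>2 < s\<^sup>2" using sg q by (intro power_strict_mono) auto
    then have D0: "D > 0" unfolding D_def by (simp add: power_mult_distrib)
    have ne: "(s\<^sup>2 + s*D)/2 \<noteq> (s\<^sup>2 - s*D)/2" using D0 spos by simp
    have m1: "root_mult g R = 1" if "R \<in> {(s\<^sup>2 + s*D)/2, (s\<^sup>2 - s*D)/2}" for R
    proof -
      have x: "R > q\<^sup>2 \<and> g R = 0" using inZ that by blast
      have R0: "R > 0" using x q by (meson less_trans zero_less_power)
      have "R \<noteq> s\<^sup>2/2" using that D0 spos by auto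
      then have "-1 + s\<^sup>2 / (2*R) \<noteq> 0" using R0 by (auto simp: field_simps)
      then have "deriv g R \<noteq> 0" using Z_deriv[OF q, of R s] x unfolding g_def by simp
      then show ?thesis using rm1 x by blast
    qed
    have "(\<Sum>R\<in>{(s\<^sup>2 + s*D)/2, (s\<^sup>2 - s*D)/2}. root_mult g R) = 2"
      using ne m1 by simp
    then show ?thesis using Z True unfolding g_def by simp
  qed
qed




definition tt :: "nat \<Rightarrow> nat \<Rightarrow> real" where "tt n \<mu> = (if \<mu> \<le> n div 2 then 1 else -1)"

lemma angle_unique:
  assumes "-pi < a" "a \<le> pi" "-pi < b" "b \<le> pi" "cos a = cos b" "sin a = sin b"
  shows "a = b"
proof -
  have c: "cis a = cis b" using assms by (simp add: complex_eq_iff)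
  have "sgn (cis a) = cis a" by (simp add: sgn_div_norm)
  then have "Arg (cis a) = a" "Arg (cis a) = b" using c assms by (auto intro!: cis_Arg_unique)
  then show ?thesis by simp
qed

lemma sum_tt: assumes "even n" shows "(\<Sum>\<mu>=1..n. tt n \<mu>) = 0"
proof -
  obtain m where m: "n = 2*m" using assms by blast
  have sp: "{1..n} = {Suc 0..<Suc m} \<union> {Suc m..<Suc n}" "{Suc 0..<Suc m} \<inter> {Suc m..<Suc n} = {}"
    using m by auto
  have a: "(\<Sum>\<mu>\<in>{Suc 0..<Suc m}. tt n \<mu>) = real m"
    using m by (simp add: tt_def)
  have b: "(\<Sum>\<mu>\<in>{Suc m..<Suc n}. tt n \<mu>) = - real m"
  proof -
    have "(\<Sum>\<mu>\<in>{Suc m..<Suc n}. tt n \<mu>) = (\<Sum>\<mu>\<in>{Suc m..<Suc n}. -1)"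
      using m by (intro sum.cong) (auto simp: tt_def)
    then show ?thesis using m by simp
  qed
  show ?thesis unfolding sp(1) by (subst sum.union_disjoint) (use sp(2) a b in auto)
qed

context
  fixes n :: nat and q :: real and \<omega> k :: "nat \<Rightarrow> real"
  assumes ev: "even n" and n2: "n \<ge> 2" and q: "q > 0"
    and om: "\<omega> = (\<lambda>\<nu>. if \<nu> \<le> n div 2 then real n * q else - (real n * q))"
    and kk: "k = (\<lambda>\<nu>. real n)"
begin

lemma om_tt: "\<omega> \<nu> = real n * q * tt n \<nu>" by (simp add: om tt_def)

lemma npos: "real n > 0" using n2 by simp

lemma eqn_simp: "(1 / real n) * (\<Sum>\<mu>=1..n. k \<nu> * k \<mu> * sin (\<theta> \<nu> - \<theta> \<mu>))
   = real n * (sin (\<theta> \<nu>) * (\<Sum>\<mu>=1..n. cos (\<theta> \<mu>)) - cos (\<theta> \<nu>) * (\<Sum>\<mu>=1..n. sin (\<theta> \<mu>)))"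
  using npos by (simp add: kk sin_diff sum_distrib_left sum_subtractf algebra_simps flip: sum_divide_distrib)

lemma z_simp:
  "Re (\<Sum>\<mu>=1..n. complex_of_real (k \<mu>) * exp (\<i> * complex_of_real (\<theta> \<mu>))) = real n * (\<Sum>\<mu>=1..n. cos (\<theta> \<mu>))"
  "Im (\<Sum>\<mu>=1..n. complex_of_real (k \<mu>) * exp (\<i> * complex_of_real (\<theta> \<mu>))) = real n * (\<Sum>\<mu>=1..n. sin (\<theta> \<mu>))"
  by (simp_all add: kk sum_distrib_left Re_exp Im_exp)

lemma order_R_simp: "order_R n k \<theta> = (\<Sum>\<mu>=1..n. cos (\<theta> \<mu>))\<^sup>2"
  using npos by (simp add: order_R_def kk flip: sum_distrib_left)

lemma f_simp: "f_sigma n \<omega> k \<sigma> = (\<lambda>R. - R + (\<Sum>\<mu>=1..n. \<sigma> \<mu>) * sqrt (R - q\<^sup>2))"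
proof
  fix R
  have "sqrt ((k \<mu>)\<^sup>2 * R - (\<omega> \<mu>)\<^sup>2) = real n * sqrt (R - q\<^sup>2)" for \<mu>
  proof -
    have "(k \<mu>)\<^sup>2 * R - (\<omega> \<mu>)\<^sup>2 = (real n)\<^sup>2 * (R - q\<^sup>2)"
      by (simp add: kk om power_mult_distrib algebra_simps)
    then show ?thesis by (simp add: real_sqrt_mult)
  qed
  then show "f_sigma n \<omega> k \<sigma> R = - R + (\<Sum>\<mu>=1..n. \<sigma> \<mu>) * sqrt (R - q\<^sup>2)"
    using npos by (simp add: f_sigma_def sum_distrib_left sum_distrib_right algebra_simps)
qed


lemma tt_sq: "(tt n \<mu>)\<^sup>2 = 1" by (simp add: tt_def)

lemma char:
  assumes E: "is_equilibrium n \<omega> k \<theta>"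
  defines "C \<equiv> \<Sum>\<mu>=1..n. cos (\<theta> \<mu>)"
  shows "C > 0" "C\<^sup>2 > q\<^sup>2" "\<forall>\<mu>\<in>{1..n}. sin (\<theta> \<mu>) = tt n \<mu> * q / C"
    "\<forall>\<mu>\<in>{1..n}. cos (\<theta> \<mu>) = sign_pattern \<theta> \<mu> * sqrt (1 - q\<^sup>2/C\<^sup>2) \<and> sign_pattern \<theta> \<mu> \<in> {-1,1}"
    "- C\<^sup>2 + (\<Sum>\<mu>=1..n. sign_pattern \<theta> \<mu>) * sqrt (C\<^sup>2 - q\<^sup>2) = 0"
proof -
  define S where "S = (\<Sum>\<mu>=1..n. sin (\<theta> \<mu>))"
  have eq: "\<forall>\<nu>\<in>{1..n}. \<omega> \<nu> = real n * (sin (\<theta> \<nu>) * C - cos (\<theta> \<nu>) * S)"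
    and Im: "real n * S = 0" and Re: "real n * C \<ge> 0"
    using E unfolding is_equilibrium_def Let_def eqn_simp z_simp C_def S_def by auto
  have S0: "S = 0" using Im npos by simp
  have eq2: "q * tt n \<nu> = sin (\<theta> \<nu>) * C" if "\<nu> \<in> {1..n}" for \<nu>
    using eq that S0 npos unfolding om_tt by auto
  have "q * tt n 1 \<noteq> 0" using q by (simp add: tt_def)
  then have "C \<noteq> 0" using eq2[of 1] n2 by auto
  then show Cp: "C > 0" using Re npos by (simp add: zero_le_mult_iff)
  show sn: "\<forall>\<mu>\<in>{1..n}. sin (\<theta> \<mu>) = tt n \<mu> * q / C"
    using eq2 Cp by (auto simp: field_simps)
  define c0 where "c0 = sqrt (1 - q\<^sup>2/C\<^sup>2)"
  have cs: "(cos (\<theta> \<mu>))\<^sup>2 = 1 - q\<^sup>2/C\<^sup>2" if "\<mu> \<in> {1..n}" for \<mu>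
  proof -
    have "(sin (\<theta> \<mu>))\<^sup>2 = q\<^sup>2/C\<^sup>2" using sn that tt_sq[of \<mu>]
      by (simp add: power_divide power_mult_distrib)
    then show ?thesis using sin_cos_squared_add[of "\<theta> \<mu>"] by linarith
  qed
  have ac: "\<bar>cos (\<theta> \<mu>)\<bar> = c0" if "\<mu> \<in> {1..n}" for \<mu>
    unfolding c0_def using cs[OF that] by (metis real_sqrt_abs)
  have c0p: "c0 > 0"
  proof (rule ccontr)
    assume "\<not> c0 > 0"
    then have "c0 = 0" using ac[of 1] n2 by auto
    then have "C = 0" unfolding C_def using ac by (intro sum.neutral) auto
    then show False using Cp by simp
  qed
  have cosf: "cos (\<theta> \<mu>) = sign_pattern \<theta> \<mu> * c0 \<and> sign_pattern \<theta> \<mu> \<in> {-1,1}" if "\<mu> \<in> {1..n}" for \<mu>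
  proof -
    have "cos (\<theta> \<mu>) \<noteq> 0" using ac[OF that] c0p by auto
    then show ?thesis using ac[OF that] unfolding sign_pattern_def
      by (cases "cos (\<theta> \<mu>) > 0") (auto simp: sgn_if)
  qed
  then show "\<forall>\<mu>\<in>{1..n}. cos (\<theta> \<mu>) = sign_pattern \<theta> \<mu> * sqrt (1 - q\<^sup>2/C\<^sup>2) \<and> sign_pattern \<theta> \<mu> \<in> {-1,1}"
    unfolding c0_def by blast
  have "1 - q\<^sup>2/C\<^sup>2 > 0" using c0p unfolding c0_def by simp
  then show Cq: "C\<^sup>2 > q\<^sup>2" using Cp by (simp add: field_simps)
  have Cs: "C = (\<Sum>\<mu>=1..n. sign_pattern \<theta> \<mu>) * c0"
    unfolding C_def sum_distrib_right using cosf by (intro sum.cong) auto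
  have "C * c0 = sqrt (C\<^sup>2 - q\<^sup>2)"
  proof -
    have "C * c0 = sqrt (C\<^sup>2) * c0" using Cp by simp
    also have "\<dots> = sqrt (C\<^sup>2 * (1 - q\<^sup>2/C\<^sup>2))" unfolding c0_def real_sqrt_mult ..
    also have "C\<^sup>2 * (1 - q\<^sup>2/C\<^sup>2) = C\<^sup>2 - q\<^sup>2" using Cp by (simp add: field_simps)
    finally show ?thesis .
  qed
  then show "- C\<^sup>2 + (\<Sum>\<mu>=1..n. sign_pattern \<theta> \<mu>) * sqrt (C\<^sup>2 - q\<^sup>2) = 0"
    using Cs by (simp add: power2_eq_square algebra_simps)
qed


lemma constr:
  assumes \<sigma>: "\<sigma> \<in> PiE {1..n} (\<lambda>_. {-1,1})" and R: "R > q\<^sup>2" "- R + (\<Sum>\<mu>=1..n. \<sigma> \<mu>) * sqrt (R - q\<^sup>2) = 0"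
  defines "\<theta> \<equiv> \<lambda>\<mu>. if \<mu> \<in> {1..n} then Arg (Complex (\<sigma> \<mu> * sqrt (1 - q\<^sup>2/R)) (tt n \<mu> * q / sqrt R)) else undefined"
  shows "is_equilibrium n \<omega> k \<theta>" "restrict (sign_pattern \<theta>) {1..n} = \<sigma>" "order_R n k \<theta> = R"
proof -
  define c where "c = sqrt (1 - q\<^sup>2/R)"
  define r where "r = sqrt R"
  have R0: "R > 0" using R(1) q by (meson less_trans zero_less_power)
  have r0: "r > 0" unfolding r_def using R0 by simp
  have "q\<^sup>2/R < 1" using R R0 by (simp add: field_simps)
  then have c0: "c > 0" unfolding c_def by simp
  have rr: "r * r = R" unfolding r_def using R0 by simp
  have cc: "c * c = 1 - q\<^sup>2/R" unfolding c_def using \<open>q\<^sup>2/R < 1\<close> by simp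
  have sig1: "\<sigma> \<mu> \<in> {-1,1}" if "\<mu> \<in> {1..n}" for \<mu> using \<sigma> that by (auto simp: PiE_def Pi_def)
  have sq1: "(\<sigma> \<mu>)\<^sup>2 = 1" if "\<mu> \<in> {1..n}" for \<mu> using sig1[OF that] by auto
  have cs: "cos (\<theta> \<mu>) = \<sigma> \<mu> * c \<and> sin (\<theta> \<mu>) = tt n \<mu> * q / r" if "\<mu> \<in> {1..n}" for \<mu>
  proof -
    define z where "z = Complex (\<sigma> \<mu> * c) (tt n \<mu> * q / r)"
    have "(\<sigma> \<mu> * c)\<^sup>2 + (tt n \<mu> * q / r)\<^sup>2 = 1"
      using sq1[OF that] tt_sq[of \<mu>] cc rr R0
      by (simp add: power_mult_distrib power_divide power2_eq_square[of c] power2_eq_square[of r])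
    then have nz: "norm z = 1" unfolding z_def by (simp add: complex_norm)
    then have "z \<noteq> 0" by auto
    then have "cos (Arg z) = \<sigma> \<mu> * c" "sin (Arg z) = tt n \<mu> * q / r"
      using nz by (simp_all add: cos_Arg sin_Arg z_def)
    then show ?thesis using that unfolding \<theta>_def z_def c_def r_def by simp
  qed
  have sp: "sign_pattern \<theta> \<mu> = \<sigma> \<mu>" if "\<mu> \<in> {1..n}" for \<mu>
    using cs[OF that] c0 sig1[OF that] unfolding sign_pattern_def by (auto simp: sgn_mult)
  have sC: "(\<Sum>\<mu>=1..n. cos (\<theta> \<mu>)) = (\<Sum>\<mu>=1..n. \<sigma> \<mu>) * c"
    unfolding sum_distrib_right using cs by (intro sum.cong) auto
  have "sqrt (R - q\<^sup>2) = r * c"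
  proof -
    have "R - q\<^sup>2 = R * (1 - q\<^sup>2/R)" using R0 by (simp add: field_simps)
    then show ?thesis unfolding r_def c_def by (simp add: real_sqrt_mult)
  qed
  then have "r * r = (\<Sum>\<mu>=1..n. \<sigma> \<mu>) * r * c" using R rr by (simp add: algebra_simps)
  then have Cr: "(\<Sum>\<mu>=1..n. cos (\<theta> \<mu>)) = r" using sC r0 by (simp add: algebra_simps)
  have Sr: "(\<Sum>\<mu>=1..n. sin (\<theta> \<mu>)) = 0"
  proof -
    have "(\<Sum>\<mu>=1..n. sin (\<theta> \<mu>)) = (\<Sum>\<mu>=1..n. tt n \<mu>) * (q / r)"
      unfolding sum_distrib_right using cs by (intro sum.cong) auto
    then show ?thesis using sum_tt[OF ev] by simp
  qed
  have PiE: "\<theta> \<in> PiE {1..n} (\<lambda>_. {-pi<..pi})"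
    unfolding \<theta>_def using Arg_bounded by auto
  show "is_equilibrium n \<omega> k \<theta>"
    unfolding is_equilibrium_def Let_def eqn_simp z_simp Cr Sr
    using PiE cs r0 npos by (auto simp: om_tt)
  show "restrict (sign_pattern \<theta>) {1..n} = \<sigma>"
    using sp \<sigma> by (auto simp: restrict_def PiE_def extensional_def)
  show "order_R n k \<theta> = R" unfolding order_R_simp Cr using rr by (simp add: power2_eq_square)
qed


lemma sp_in: "is_equilibrium n \<omega> k \<theta> \<Longrightarrow> \<theta> \<in> PiE {1..n} (\<lambda>_. {-pi<..pi})"
  unfolding is_equilibrium_def by simp

lemma bij_Phi:
  "bij_betw (\<lambda>\<theta>. (restrict (sign_pattern \<theta>) {1..n}, order_R n k \<theta>)) {\<theta>. is_equilibrium n \<omega> k \<theta>}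
     (SIGMA \<sigma>:PiE {1..n} (\<lambda>_. {-1,1}). {R. R > q\<^sup>2 \<and> - R + (\<Sum>\<mu>=1..n. \<sigma> \<mu>) * sqrt (R - q\<^sup>2) = 0})"
  (is "bij_betw ?F ?E ?P")
proof (rule bij_betw_imageI)
  show "inj_on ?F ?E"
  proof (rule inj_onI)
    fix a b assume a: "a \<in> ?E" and b: "b \<in> ?E" and F: "?F a = ?F b"
    define Ca where "Ca = (\<Sum>\<mu>=1..n. cos (a \<mu>))"
    define Cb where "Cb = (\<Sum>\<mu>=1..n. cos (b \<mu>))"
    have ca: "Ca > 0" "\<forall>\<mu>\<in>{1..n}. sin (a \<mu>) = tt n \<mu> * q / Ca"
      "\<forall>\<mu>\<in>{1..n}. cos (a \<mu>) = sign_pattern a \<mu> * sqrt (1 - q\<^sup>2/Ca\<^sup>2)"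
      using char[of a] a unfolding Ca_def by auto
    have cb: "Cb > 0" "\<forall>\<mu>\<in>{1..n}. sin (b \<mu>) = tt n \<mu> * q / Cb"
      "\<forall>\<mu>\<in>{1..n}. cos (b \<mu>) = sign_pattern b \<mu> * sqrt (1 - q\<^sup>2/Cb\<^sup>2)"
      using char[of b] b unfolding Cb_def by auto
    have "Ca\<^sup>2 = Cb\<^sup>2" using F unfolding order_R_simp Ca_def Cb_def by simp
    then have CC: "Ca = Cb" using ca(1) cb(1) by (simp add: power2_eq_iff_nonneg)
    have spe: "sign_pattern a \<mu> = sign_pattern b \<mu>" if "\<mu> \<in> {1..n}" for \<mu>
      using F that by (metis (no_types, lifting) prod.inject restrict_apply')
    have pa: "a \<in> PiE {1..n} (\<lambda>_. {-pi<..pi})" and pb: "b \<in> PiE {1..n} (\<lambda>_. {-pi<..pi})"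
      using a b sp_in by auto
    show "a = b"
    proof (rule PiE_ext[OF pa pb])
      fix \<mu> assume m: "\<mu> \<in> {1..n}"
      show "a \<mu> = b \<mu>"
      proof (rule angle_unique)
        show "-pi < a \<mu>" "a \<mu> \<le> pi" using pa m by (auto simp: PiE_def Pi_def)
        show "-pi < b \<mu>" "b \<mu> \<le> pi" using pb m by (auto simp: PiE_def Pi_def)
        show "cos (a \<mu>) = cos (b \<mu>)" using ca(3) cb(3) m CC spe[OF m] by simp
        show "sin (a \<mu>) = sin (b \<mu>)" using ca(2) cb(2) m CC by simp
      qed
    qed
  qed
  show "?F ` ?E = ?P"
  proof
    show "?F ` ?E \<subseteq> ?P"
    proof (rule image_subsetI)
      fix \<theta> assume t: "\<theta> \<in> ?E"
      define C where "C = (\<Sum>\<mu>=1..n. cos (\<theta> \<mu>))"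
      have c: "C\<^sup>2 > q\<^sup>2" "\<forall>\<mu>\<in>{1..n}. sign_pattern \<theta> \<mu> \<in> {-1,1}"
        "- C\<^sup>2 + (\<Sum>\<mu>=1..n. sign_pattern \<theta> \<mu>) * sqrt (C\<^sup>2 - q\<^sup>2) = 0"
        using char[of \<theta>] t unfolding C_def by auto
      have ss: "(\<Sum>\<mu>=1..n. restrict (sign_pattern \<theta>) {1..n} \<mu>) = (\<Sum>\<mu>=1..n. sign_pattern \<theta> \<mu>)"
        by (intro sum.cong) auto
      show "?F \<theta> \<in> ?P" using c unfolding order_R_simp C_def[symmetric] ss
        by (auto simp: PiE_def Pi_def ss)
    qed
    show "?P \<subseteq> ?F ` ?E"
    proof clarify
      fix \<sigma> R assume s: "\<sigma> \<in> PiE {1..n} (\<lambda>_. {-1,1})" and R: "R > q\<^sup>2" "- R + (\<Sum>\<mu>=1..n. \<sigma> \<mu>) * sqrt (R - q\<^sup>2) = 0"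
      note cc = constr[OF s R]
      then show "(\<sigma>, R) \<in> ?F ` ?E"
        by (intro image_eqI[where x = "\<lambda>\<mu>. if \<mu> \<in> {1..n} then Arg (Complex (\<sigma> \<mu> * sqrt (1 - q\<^sup>2/R)) (tt n \<mu> * q / sqrt R)) else undefined"]) auto
    qed
  qed
qed

lemma main_sum:
  "finite {\<theta>. is_equilibrium n \<omega> k \<theta>} \<and>
   (\<Sum>\<theta>\<in>{\<theta>. is_equilibrium n \<omega> k \<theta>}. eq_mult n \<omega> k \<theta>) =
   (\<Sum>\<sigma>\<in>PiE {1..n} (\<lambda>_. {-1,1}). (if (\<Sum>\<mu>=1..n. \<sigma> \<mu>) \<ge> 2*q then 2 else 0))"
proof -
  let ?F = "\<lambda>\<theta>. (restrict (sign_pattern \<theta>) {1..n}, order_R n k \<theta>)"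
  let ?Z = "\<lambda>\<sigma>. {R. R > q\<^sup>2 \<and> - R + (\<Sum>\<mu>=1..n. \<sigma> \<mu>) * sqrt (R - q\<^sup>2) = 0}"
  define h2 where "h2 = (\<lambda>(\<sigma>::nat\<Rightarrow>real) R. root_mult (\<lambda>R. - R + (\<Sum>\<mu>=1..n. \<sigma> \<mu>) * sqrt (R - q\<^sup>2)) R)"
  let ?h = "case_prod h2"
  have finA: "finite (PiE {1..n} (\<lambda>_::nat. {-1,1::real}))" by (intro finite_PiE) auto
  have finZ: "\<forall>\<sigma>\<in>PiE {1..n} (\<lambda>_. {-1,1}). finite (?Z \<sigma>)" using Z_sum[OF q] by blast
  have finP: "finite (SIGMA \<sigma>:PiE {1..n} (\<lambda>_. {-1,1}). ?Z \<sigma>)"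
    using finA finZ by (intro finite_SigmaI) auto
  show ?thesis
  proof
    show "finite {\<theta>. is_equilibrium n \<omega> k \<theta>}" using bij_betw_finite[OF bij_Phi] finP by simp
    have em: "eq_mult n \<omega> k \<theta> = ?h (?F \<theta>)" for \<theta>
    proof -
      have ss: "(\<Sum>\<mu>=1..n. restrict (sign_pattern \<theta>) {1..n} \<mu>) = (\<Sum>\<mu>=1..n. sign_pattern \<theta> \<mu>)"
        by (intro sum.cong) auto
      show ?thesis unfolding eq_mult_def f_simp by (simp add: ss h2_def)
    qed
    have "(\<Sum>\<theta>\<in>{\<theta>. is_equilibrium n \<omega> k \<theta>}. eq_mult n \<omega> k \<theta>) = (\<Sum>\<theta>\<in>{\<theta>. is_equilibrium n \<omega> k \<theta>}. ?h (?F \<theta>))"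
      using em by simp
    also have "\<dots> = (\<Sum>p\<in>(SIGMA \<sigma>:PiE {1..n} (\<lambda>_. {-1,1}). ?Z \<sigma>). ?h p)"
      by (rule sum.reindex_bij_betw[OF bij_Phi])
    also have "\<dots> = (\<Sum>\<sigma>\<in>PiE {1..n} (\<lambda>_. {-1,1}). \<Sum>R\<in>?Z \<sigma>. h2 \<sigma> R)"
      by (rule sum.Sigma[symmetric, OF finA finZ])
    also have "\<dots> = (\<Sum>\<sigma>\<in>PiE {1..n} (\<lambda>_. {-1,1}). (if (\<Sum>\<mu>=1..n. \<sigma> \<mu>) \<ge> 2*q then 2 else 0))"
      using Z_sum[OF q] unfolding h2_def by (intro sum.cong) auto
    finally show "(\<Sum>\<theta>\<in>{\<theta>. is_equilibrium n \<omega> k \<theta>}. eq_mult n \<omega> k \<theta>) =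
      (\<Sum>\<sigma>\<in>PiE {1..n} (\<lambda>_. {-1,1}). (if (\<Sum>\<mu>=1..n. \<sigma> \<mu>) \<ge> 2*q then 2 else 0))" .
  qed
qed

end



lemma sum_pow_card:
  assumes "finite S"
  shows "(\<Sum>A\<in>Pow S. G (card A)) = (\<Sum>j\<le>card S. of_nat (card S choose j) * G j)"
proof -
  have "(\<Sum>A\<in>Pow S. G (card A)) = (\<Sum>j\<in>{..card S}. \<Sum>A\<in>{A\<in>Pow S. card A = j}. G (card A))"
    using assms by (intro sum.group[symmetric]) (auto intro: card_mono)
  also have "\<dots> = (\<Sum>j\<le>card S. of_nat (card S choose j) * G j)"
  proof (intro sum.cong refl)
    fix j
    have "(\<Sum>A\<in>{A\<in>Pow S. card A = j}. G (card A)) = (\<Sum>A\<in>{A\<in>Pow S. card A = j}. G j)" by simp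
    also have "\<dots> = of_nat (card {A. A \<subseteq> S \<and> card A = j}) * G j" by simp
    also have "\<dots> = of_nat (card S choose j) * G j" using n_subsets[OF assms] by simp
    finally show "(\<Sum>A\<in>{A\<in>Pow S. card A = j}. G (card A)) = of_nat (card S choose j) * G j" .
  qed
  finally show ?thesis .
qed

lemma sum_sigma_card:
  fixes n :: nat and F :: "real \<Rightarrow> 'a::comm_monoid_add"
  shows "(\<Sum>\<sigma>\<in>PiE {1..n} (\<lambda>_. {-1,1::real}). F (\<Sum>\<mu>=1..n. \<sigma> \<mu>)) = (\<Sum>A\<in>Pow {1..n}. F (2 * real (card A) - real n))"
proof (rule sum.reindex_bij_witness[where i = "\<lambda>A. (\<lambda>\<mu>. if \<mu> \<in> {1..n} then (if \<mu> \<in> A then 1 else -1) else undefined)"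
      and j = "\<lambda>\<sigma>. {\<mu>\<in>{1..n}. \<sigma> \<mu> = 1}"])
  fix \<sigma> assume s: "\<sigma> \<in> PiE {1..n} (\<lambda>_. {-1,1::real})"
  show "{\<mu>\<in>{1..n}. \<sigma> \<mu> = 1} \<in> Pow {1..n}" by auto
  show "(\<lambda>\<mu>. if \<mu> \<in> {1..n} then (if \<mu> \<in> {\<mu>\<in>{1..n}. \<sigma> \<mu> = 1} then 1 else -1) else undefined) = \<sigma>"
    using s by (auto simp: PiE_def Pi_def extensional_def fun_eq_iff)
  define A where "A = {\<mu>\<in>{1..n}. \<sigma> \<mu> = 1}"
  have "(\<Sum>\<mu>=1..n. \<sigma> \<mu>) = (\<Sum>\<mu>=1..n. (if \<mu> \<in> A then 1 else -1 :: real))"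
    using s by (intro sum.cong) (auto simp: A_def PiE_def Pi_def)
  also have "\<dots> = real (card ({1..n} \<inter> A)) - real (card ({1..n} - A))"
    by (simp add: sum.If_cases Diff_eq)
  also have "\<dots> = 2 * real (card A) - real n"
  proof -
    have "{1..n} \<inter> A = A" by (auto simp: A_def)
    moreover have "card ({1..n} - A) = n - card A" by (subst card_Diff_subset) (auto simp: A_def)
    moreover have "card A \<le> n" by (metis (no_types, lifting) A_def card_atLeastAtMost card_mono finite_atLeastAtMost diff_Suc_1 mem_Collect_eq subsetI)
    ultimately show ?thesis by (simp add: of_nat_diff)
  qed
  finally show "F (2 * real (card {\<mu>\<in>{1..n}. \<sigma> \<mu> = 1}) - real n) = F (\<Sum>\<mu>=1..n. \<sigma> \<mu>)"
    by (simp add: A_def)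
next
  fix A assume A: "A \<in> Pow {1..n}"
  show "(\<lambda>\<mu>. if \<mu> \<in> {1..n} then (if \<mu> \<in> A then 1 else -1) else undefined) \<in> PiE {1..n} (\<lambda>_. {-1,1::real})"
    by (auto split: if_splits)
  show "{\<mu>\<in>{1..n}. (if \<mu> \<in> {1..n} then (if \<mu> \<in> A then 1 else -1 :: real) else undefined) = 1} = A"
    using A by auto
qed


lemma binom_identity:
  fixes m :: nat and q :: real
  assumes q: "q > 0"
  shows "(\<Sum>j\<le>2*m. int (2*m choose j) * (if 2 * real j - real (2*m) \<ge> 2*q then 2 else 0))
    = 2 ^ (2*m) - (\<Sum>l\<in>{l::int. - q < of_int l \<and> of_int l < q}.
                        (if 0 \<le> int m + l then int (2*m choose nat (int m + l)) else 0))"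
proof -
  define n where "n = 2*m"
  define c where "c j = int (n choose j)" for j
  define U where "U = {j\<in>{..n}. real j - m \<ge> q}"
  define Lw where "Lw = {j\<in>{..n}. real m - j \<ge> q}"
  define M where "M = {j\<in>{..n}. real m - q < j \<and> j < real m + q}"
  have a: "(\<Sum>j\<le>n. c j * (if 2 * real j - real n \<ge> 2*q then 2 else 0)) = 2 * (\<Sum>j\<in>U. c j)"
  proof -
    have "(\<Sum>j\<le>n. c j * (if 2 * real j - real n \<ge> 2*q then 2 else 0)) = (\<Sum>j\<le>n. if real j - m \<ge> q then 2 * c j else 0)"
      by (intro sum.cong) (auto simp: n_def)
    also have "\<dots> = (\<Sum>j\<in>U. 2 * c j)" unfolding U_def by (rule sum.inter_filter[symmetric]) simp
    finally show ?thesis by (simp add: sum_distrib_left)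
  qed
  have b: "(\<Sum>j\<le>n. c j) = (\<Sum>j\<in>U. c j) + (\<Sum>j\<in>Lw. c j) + (\<Sum>j\<in>M. c j)"
  proof -
    have e: "{..n} = U \<union> (Lw \<union> M)" by (auto simp: U_def Lw_def M_def)
    have d1: "U \<inter> (Lw \<union> M) = {}" using q by (auto simp: U_def Lw_def M_def)
    have d2: "Lw \<inter> M = {}" by (auto simp: Lw_def M_def)
    have f: "finite U" "finite Lw" "finite M" by (auto simp: U_def Lw_def M_def)
    show ?thesis unfolding e using d1 d2 f by (simp add: sum.union_disjoint)
  qed
  have tot: "(\<Sum>j\<le>n. c j) = 2^n" unfolding c_def by (simp flip: of_nat_sum add: choose_row_sum)
  have sym: "(\<Sum>j\<in>U. c j) = (\<Sum>j\<in>Lw. c j)"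
  proof (rule sum.reindex_bij_witness[where i = "\<lambda>j. n - j" and j = "\<lambda>j. n - j"])
    fix a assume "a \<in> U" then show "n - (n - a) = a" "n - a \<in> Lw" "c (n - a) = c a"
      by (auto simp: Lw_def U_def n_def c_def of_nat_diff binomial_symmetric[of a "2*m"])
  next
    fix b assume "b \<in> Lw" then show "n - (n - b) = b" "n - b \<in> U"
      by (auto simp: Lw_def U_def n_def of_nat_diff)
  qed
  define F where "F l = (if 0 \<le> int m + l then int (n choose nat (int m + l)) else 0)" for l
  define L where "L = {l::int. - q < of_int l \<and> of_int l < q}"
  define L' where "L' = {l\<in>L. - int m \<le> l \<and> l \<le> int m}"
  have finL: "finite L"
  proof (rule finite_subset)
    show "L \<subseteq> {-\<lceil>q\<rceil>..\<lceil>q\<rceil>}" unfolding L_def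
    proof clarify
      fix l :: int assume "- q < of_int l" "of_int l < q"
      then have "of_int (-\<lceil>q\<rceil>) \<le> (of_int l :: real)" "of_int l \<le> (of_int \<lceil>q\<rceil> :: real)"
        using le_of_int_ceiling[of q] by linarith+
      then show "l \<in> {-\<lceil>q\<rceil>..\<lceil>q\<rceil>}" by (simp only: of_int_le_iff atLeastAtMost_iff)
    qed
  qed simp
  have d: "(\<Sum>l\<in>L. F l) = (\<Sum>j\<in>M. c j)"
  proof -
    have "(\<Sum>l\<in>L. F l) = (\<Sum>l\<in>L'. F l)"
    proof (rule sum.mono_neutral_right[OF finL])
      show "L' \<subseteq> L" by (auto simp: L'_def)
      show "\<forall>l\<in>L - L'. F l = 0"
      proof
        fix l assume "l \<in> L - L'"
        then have "l < - int m \<or> l > int m" by (auto simp: L'_def)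
        then show "F l = 0"
        proof
          assume "l > int m" then have "nat (int m + l) > n" by (simp add: n_def)
          then show ?thesis by (simp add: F_def)
        qed (simp add: F_def)
      qed
    qed
    also have "\<dots> = (\<Sum>j\<in>M. c j)"
    proof (rule sum.reindex_bij_witness[where i = "\<lambda>j. int j - int m" and j = "\<lambda>l. nat (int m + l)"])
      fix a assume a: "a \<in> L'"
      then show "int (nat (int m + a)) - int m = a" by (simp add: L'_def)
      show "nat (int m + a) \<in> M" using a by (auto simp: L'_def L_def M_def n_def)
      show "c (nat (int m + a)) = F a" using a by (simp add: L'_def c_def F_def)
    next
      fix b assume b: "b \<in> M"
      then show "nat (int m + (int b - int m)) = b" by simp
      show "int b - int m \<in> L'" using b by (auto simp: L'_def L_def M_def n_def)
    qed
    finally show ?thesis .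
  qed
  have "(\<Sum>j\<le>n. c j * (if 2 * real j - real n \<ge> 2*q then 2 else 0)) = 2^n - (\<Sum>l\<in>L. F l)"
    using a b tot sym d by linarith
  then show ?thesis unfolding c_def F_def L_def n_def by simp
qed




theorem theorem4:
  fixes n :: nat and q :: real and \<omega> k :: "nat \<Rightarrow> real"
  assumes "even n" and "n \<ge> 2" and "q > 0"
    and "\<omega> = (\<lambda>\<nu>. if \<nu> \<le> n div 2 then real n * q else - (real n * q))"
    and "k = (\<lambda>\<nu>. real n)"
  shows "finite {\<theta>. is_equilibrium n \<omega> k \<theta>} \<and>
         int (\<Sum>\<theta>\<in>{\<theta>. is_equilibrium n \<omega> k \<theta>}. eq_mult n \<omega> k \<theta>)
           = 2 ^ n - (\<Sum>l\<in>{l::int. - q < of_int l \<and> of_int l < q}.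
                        (if 0 \<le> int (n div 2) + l then int (n choose nat (int (n div 2) + l)) else 0))"
proof -
  obtain m where m: "n = 2*m" using assms(1) by blast
  note ms = main_sum[OF assms]
  have "(\<Sum>\<sigma>\<in>PiE {1..n} (\<lambda>_. {-1,1::real}). (if (\<Sum>\<mu>=1..n. \<sigma> \<mu>) \<ge> 2*q then 2 else 0::nat))
     = (\<Sum>A\<in>Pow {1..n}. (\<lambda>j. if 2 * real j - real n \<ge> 2*q then 2 else 0::nat) (card A))"
    by (rule sum_sigma_card)
  also have "\<dots> = (\<Sum>j\<le>n. (n choose j) * (if 2 * real j - real n \<ge> 2*q then 2 else 0))"
    using sum_pow_card[of "{1..n}" "\<lambda>j. if 2 * real j - real n \<ge> 2*q then 2 else 0::nat"] by simp
  finally have e: "int (\<Sum>\<sigma>\<in>PiE {1..n} (\<lambda>_. {-1,1::real}). (if (\<Sum>\<mu>=1..n. \<sigma> \<mu>) \<ge> 2*q then 2 else 0::nat))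
     = (\<Sum>j\<le>n. int (n choose j) * (if 2 * real j - real n \<ge> 2*q then 2 else 0))"
    by (simp add: of_nat_sum of_nat_mult if_distrib cong: if_cong)
  have nd: "n div 2 = m" using m by simp
  note B = binom_identity[OF assms(3), of m]
  note B' = B[unfolded m[symmetric], unfolded nd[symmetric]]
  have "int (\<Sum>\<theta>\<in>{\<theta>. is_equilibrium n \<omega> k \<theta>}. eq_mult n \<omega> k \<theta>)
           = 2 ^ n - (\<Sum>l\<in>{l::int. - q < of_int l \<and> of_int l < q}.
                        (if 0 \<le> int (n div 2) + l then int (n choose nat (int (n div 2) + l)) else 0))"
    using ms e B' by (simp only:)
  then show ?thesis using ms by simp
qed


end
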